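(* Let $(M,g)$ be a Riemannian manifold of dimension $n\ge 3$ and let $(M,g,\xi,\gamma,\delta)$ be a $\xi^\flat$-Yamabe soliton, i.e. $\gamma,\delta$ are real constants with $\frac12\mathcal{L}_\xi g=\gamma g+\delta\,\xi^\flat\otimes\xi^\flat$, such that $\xi^\flat$ is a Schrödinger–Ricci harmonic form, i.e. $(\Delta+\mathrm{Ric}_\sharp)(\xi^\flat)=0$. Then either $\delta=0$ (the soliton is a generalized Yamabe soliton) or $\mathrm{div}\,\xi=0$.
   Context: $\xi^\flat=g(\xi,\cdot)$, $\mathrm{Ric}_\sharp(\theta)(X)=\mathrm{Ric}(\theta^\sharp,X)$. $\Delta$ is the operator on $1$-forms which the paper calls the Laplace–Hodge operator, with convention fixed by the identity $\mathrm{div}(\mathcal{L}_Xg)=(\Delta+\mathrm{Ric}_\sharp)(X^\flat)+d(\mathrm{div}X)$ for every vector field $X$ (with $(\mathrm{div}T)(X)=\sum_i(\nabla_{E_i}T)(E_i,X)$ for a symmetric $(0,2)$-tensor $T$). *)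

theory Defs
  imports "HOL-Analysis.Analysis"
begin

text \<open>Local-coordinate Riemannian geometry on an open set U of R^n
  (index type 'n, n = CARD('n)). Fields are functions of the point x.\<close>

type_synonym 'n pt = "real ^ 'n"

definition pd :: "'n::finite \<Rightarrow> ('n pt \<Rightarrow> real) \<Rightarrow> 'n pt \<Rightarrow> real" where
  "pd i f x = deriv (\<lambda>t. f (x + t *\<^sub>R axis i 1)) 0"

fun Ck_on :: "nat \<Rightarrow> 'n::finite pt set \<Rightarrow> ('n pt \<Rightarrow> real) \<Rightarrow> bool" where
  "Ck_on 0 U f = continuous_on U f"
| "Ck_on (Suc k) U f = (f differentiable_on U \<and> (\<forall>i. Ck_on k U (pd i f)))"

definition smooth_on :: "'n::finite pt set \<Rightarrow> ('n pt \<Rightarrow> real) \<Rightarrow> bool" where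
  "smooth_on U f = (\<forall>k. Ck_on k U f)"

definition riemannian_metric_on :: "'n::finite pt set \<Rightarrow> ('n pt \<Rightarrow> real^'n^'n) \<Rightarrow> bool" where
  "riemannian_metric_on U g =
    ((\<forall>i j. smooth_on U (\<lambda>x. g x $ i $ j)) \<and>
     (\<forall>x\<in>U. \<forall>i j. g x $ i $ j = g x $ j $ i) \<and>
     (\<forall>x\<in>U. \<forall>v. v \<noteq> 0 \<longrightarrow> v \<bullet> (g x *v v) > 0))"

definition smooth_vf_on :: "'n::finite pt set \<Rightarrow> ('n pt \<Rightarrow> real^'n) \<Rightarrow> bool" where
  "smooth_vf_on U X = (\<forall>k. smooth_on U (\<lambda>x. X x $ k))"

definition ginv :: "('n::finite pt \<Rightarrow> real^'n^'n) \<Rightarrow> 'n pt \<Rightarrow> 'n \<Rightarrow> 'n \<Rightarrow> real" where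
  "ginv g x i j = matrix_inv (g x) $ i $ j"

definition christoffel :: "('n::finite pt \<Rightarrow> real^'n^'n) \<Rightarrow> 'n \<Rightarrow> 'n \<Rightarrow> 'n \<Rightarrow> 'n pt \<Rightarrow> real" where
  "christoffel g k i j x = (1/2) * (\<Sum>l\<in>UNIV. ginv g x k l *
      (pd i (\<lambda>y. g y $ j $ l) x + pd j (\<lambda>y. g y $ i $ l) x - pd l (\<lambda>y. g y $ i $ j) x))"

definition ricci :: "('n::finite pt \<Rightarrow> real^'n^'n) \<Rightarrow> 'n pt \<Rightarrow> 'n \<Rightarrow> 'n \<Rightarrow> real" where
  "ricci g x i j = (\<Sum>k\<in>UNIV. pd k (christoffel g k i j) x - pd j (christoffel g k i k) x
      + (\<Sum>p\<in>UNIV. christoffel g k k p x * christoffel g p i j x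
                  - christoffel g k j p x * christoffel g p i k x))"

text \<open>Musical isomorphisms; 1-forms are represented by their component fields.\<close>
definition flat :: "('n::finite pt \<Rightarrow> real^'n^'n) \<Rightarrow> ('n pt \<Rightarrow> real^'n) \<Rightarrow> 'n pt \<Rightarrow> real^'n" where
  "flat g X x = (\<chi> i. \<Sum>j\<in>UNIV. g x $ i $ j * X x $ j)"

definition sharp :: "('n::finite pt \<Rightarrow> real^'n^'n) \<Rightarrow> ('n pt \<Rightarrow> real^'n) \<Rightarrow> 'n pt \<Rightarrow> real^'n" where
  "sharp g \<theta> x = (\<chi> i. \<Sum>j\<in>UNIV. ginv g x i j * \<theta> x $ j)"

definition lie_g :: "('n::finite pt \<Rightarrow> real^'n^'n) \<Rightarrow> ('n pt \<Rightarrow> real^'n) \<Rightarrow> 'n pt \<Rightarrow> real^'n^'n" where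
  "lie_g g X x = (\<chi> i j. \<Sum>k\<in>UNIV. X x $ k * pd k (\<lambda>y. g y $ i $ j) x
       + g x $ k $ j * pd i (\<lambda>y. X y $ k) x + g x $ i $ k * pd j (\<lambda>y. X y $ k) x)"

definition div_vf :: "('n::finite pt \<Rightarrow> real^'n^'n) \<Rightarrow> ('n pt \<Rightarrow> real^'n) \<Rightarrow> 'n pt \<Rightarrow> real" where
  "div_vf g X x = (\<Sum>i\<in>UNIV. pd i (\<lambda>y. X y $ i) x
       + (\<Sum>k\<in>UNIV. christoffel g i i k x * X x $ k))"

definition cov_T :: "('n::finite pt \<Rightarrow> real^'n^'n) \<Rightarrow> ('n pt \<Rightarrow> real^'n^'n) \<Rightarrow> 'n \<Rightarrow> 'n \<Rightarrow> 'n \<Rightarrow> 'n pt \<Rightarrow> real" where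
  "cov_T g T i k j x = pd i (\<lambda>y. T y $ k $ j) x
       - (\<Sum>p\<in>UNIV. christoffel g p i k x * T x $ p $ j + christoffel g p i j x * T x $ k $ p)"

text \<open>(div T)(X) = sum over an orthonormal frame of (nabla_{E_i} T)(E_i, X),
  i.e. (div T)_j = g^ik (nabla_i T)_kj.\<close>
definition div_T :: "('n::finite pt \<Rightarrow> real^'n^'n) \<Rightarrow> ('n pt \<Rightarrow> real^'n^'n) \<Rightarrow> 'n pt \<Rightarrow> real^'n" where
  "div_T g T x = (\<chi> j. \<Sum>i\<in>UNIV. \<Sum>k\<in>UNIV. ginv g x i k * cov_T g T i k j x)"

definition ric_sharp :: "('n::finite pt \<Rightarrow> real^'n^'n) \<Rightarrow> ('n pt \<Rightarrow> real^'n) \<Rightarrow> 'n pt \<Rightarrow> real^'n" where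
  "ric_sharp g \<theta> x = (\<chi> j. \<Sum>i\<in>UNIV. sharp g \<theta> x $ i * ricci g x i j)"

definition dfun :: "('n::finite pt \<Rightarrow> real) \<Rightarrow> 'n pt \<Rightarrow> real^'n" where
  "dfun f x = (\<chi> j. pd j f x)"

text \<open>The Laplace-Hodge operator on 1-forms with the paper's convention, which is fixed by
  div(L_X g) = (Delta + Ric_sharp)(X^flat) + d(div X) for every X; since every 1-form is
  X^flat for X = theta^sharp, this determines Delta:\<close>
definition laplace_hodge :: "('n::finite pt \<Rightarrow> real^'n^'n) \<Rightarrow> ('n pt \<Rightarrow> real^'n) \<Rightarrow> 'n pt \<Rightarrow> real^'n" where
  "laplace_hodge g \<theta> x = div_T g (lie_g g (sharp g \<theta>)) x - ric_sharp g \<theta> x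
       - dfun (div_vf g (sharp g \<theta>)) x"

definition xi_flat_yamabe_soliton :: "'n::finite pt set \<Rightarrow> ('n pt \<Rightarrow> real^'n^'n) \<Rightarrow> ('n pt \<Rightarrow> real^'n) \<Rightarrow> real \<Rightarrow> real \<Rightarrow> bool" where
  "xi_flat_yamabe_soliton U g \<xi> \<gamma> \<delta> =
    (\<forall>x\<in>U. \<forall>i j. (1/2) * lie_g g \<xi> x $ i $ j
        = \<gamma> * g x $ i $ j + \<delta> * flat g \<xi> x $ i * flat g \<xi> x $ j)"

definition schroedinger_ricci_harmonic :: "'n::finite pt set \<Rightarrow> ('n pt \<Rightarrow> real^'n^'n) \<Rightarrow> ('n pt \<Rightarrow> real^'n) \<Rightarrow> bool" where
  "schroedinger_ricci_harmonic U g \<theta> = (\<forall>x\<in>U. laplace_hodge g \<theta> x + ric_sharp g \<theta> x = 0)"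

end

theory Submission
  imports Defs
begin


lemma pd_has:
  fixes f :: "'n::finite pt \<Rightarrow> real"
  assumes "f differentiable (at x)"
  shows "((\<lambda>t. f (x + t *\<^sub>R axis i 1)) has_real_derivative pd i f x) (at 0)"
proof -
  have "(\<lambda>t. f (x + t *\<^sub>R axis i 1)) differentiable (at 0)"
  proof -
    have "(\<lambda>t::real. x + t *\<^sub>R axis i 1) differentiable (at 0)"
      by (intro derivative_intros)
    moreover have "f differentiable (at ((\<lambda>t::real. x + t *\<^sub>R axis i 1) 0))" using assms by simp
    ultimately show ?thesis using differentiable_chain_at[of "\<lambda>t::real. x + t *\<^sub>R axis i 1" 0 f]
      by (simp add: o_def)
  qed
  then show ?thesis unfolding pd_def using DERIV_deriv_iff_real_differentiable by blast
qed

lemma pd_eq: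
  fixes f :: "'n::finite pt \<Rightarrow> real"
  assumes "((\<lambda>t. f (x + t *\<^sub>R axis i 1)) has_real_derivative D) (at 0)"
  shows "pd i f x = D"
  unfolding pd_def using assms DERIV_imp_deriv by blast

lemma pd_local:
  fixes f h :: "'n::finite pt \<Rightarrow> real"
  assumes "open U" "x \<in> U" "\<And>y. y \<in> U \<Longrightarrow> f y = h y"
  shows "pd i f x = pd i h x"
proof -
  have c: "continuous (at 0) (\<lambda>t::real. x + t *\<^sub>R axis i 1)"
    by (intro continuous_intros)
  have "eventually (\<lambda>t. x + t *\<^sub>R axis i 1 \<in> U) (nhds 0)"
    using c assms(1,2) unfolding continuous_at eventually_nhds_conv_at
    by (simp add: tendsto_def)
  then have "eventually (\<lambda>t. f (x + t *\<^sub>R axis i 1) = h (x + t *\<^sub>R axis i 1)) (nhds 0)"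
    by (rule eventually_mono) (simp add: assms(3))
  then show ?thesis unfolding pd_def by (rule deriv_cong_ev) simp
qed

lemma smooth_diff:
  assumes "smooth_on U f" "open U" "x \<in> U"
  shows "f differentiable (at x)"
proof -
  have "Ck_on (Suc 0) U f" using assms(1) unfolding smooth_on_def by blast
  then show ?thesis using assms differentiable_on_eq_differentiable_at by auto
qed

lemma Dmul:
  fixes f h :: "real \<Rightarrow> real"
  assumes "(f has_real_derivative D) (at 0)" "(h has_real_derivative E) (at 0)" "f 0 = a" "h 0 = b"
  shows "((\<lambda>t. f t * h t) has_real_derivative D * b + a * E) (at 0)"
  using DERIV_mult[OF assms(1,2)] assms(3,4) by (simp add: mult.commute)

lemma Dsum:
  fixes F :: "real \<Rightarrow> 'a::finite \<Rightarrow> real"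
  assumes "\<And>l. ((\<lambda>t. F t l) has_real_derivative D l) (at 0)"
  shows "((\<lambda>t. \<Sum>l\<in>UNIV. F t l) has_real_derivative (\<Sum>l\<in>UNIV. D l)) (at 0)"
  by (rule DERIV_sum) (rule assms)



lemma dsum1: fixes A :: "'a::finite \<Rightarrow> real" shows "(\<Sum>l\<in>UNIV. A l * (if l = j then 1 else 0)) = (A j::real)"
proof -
  have "(\<Sum>l\<in>UNIV. A l * (if l = j then 1 else 0)) = (\<Sum>l\<in>UNIV. if l = j then A l else 0)"
    by (rule sum.cong) auto
  then show ?thesis using sum.delta'[of UNIV j A] by simp
qed

lemma dsum2: fixes A :: "'a::finite \<Rightarrow> real" shows "(\<Sum>l\<in>UNIV. (if i = l then 1 else 0) * A l) = (A i::real)"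
proof -
  have "(\<Sum>l\<in>UNIV. (if i = l then 1 else 0) * A l) = (\<Sum>l\<in>UNIV. if i = l then A l else 0)"
    by (rule sum.cong) auto
  then show ?thesis using sum.delta[of UNIV i A] by simp
qed

locale alg =
  fixes G H :: "'n::finite \<Rightarrow> 'n \<Rightarrow> real" and dg :: "'n \<Rightarrow> 'n \<Rightarrow> 'n \<Rightarrow> real"
    and X :: "'n \<Rightarrow> real" and dX :: "'n \<Rightarrow> 'n \<Rightarrow> real"
  assumes Gs: "\<And>i j. G i j = G j i" and Hs: "\<And>i j. H i j = H j i"
    and HG: "\<And>i j. (\<Sum>k\<in>UNIV. H i k * G k j) = (if i = j then 1 else 0)"
    and dgs: "\<And>i j k. dg i j k = dg i k j"
begin

definition "C i k l = 1/2 * (dg i k l + dg k i l - dg l i k)"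
definition "Gam p i k = 1/2 * (\<Sum>l\<in>UNIV. H p l * (dg i k l + dg k i l - dg l i k))"
definition "th k = (\<Sum>l\<in>UNIV. G k l * X l)"
definition "dth i k = (\<Sum>l\<in>UNIV. dg i k l * X l + G k l * dX i l)"
definition "L k j = (\<Sum>m\<in>UNIV. X m * dg m k j + G m j * dX k m + G k m * dX j m)"
definition "N i k = dth i k - (\<Sum>m\<in>UNIV. X m * C i k m)"
definition "f = (\<Sum>a\<in>UNIV. \<Sum>b\<in>UNIV. G a b * X a * X b)"

lemma Gam_C: "Gam p i k = (\<Sum>l\<in>UNIV. H p l * C i k l)"
  unfolding Gam_def C_def by (simp add: sum_distrib_left algebra_simps)

lemma contract1: "(\<Sum>p\<in>UNIV. (\<Sum>l\<in>UNIV. H p l * A l) * G p j) = A j"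
proof -
  have "(\<Sum>p\<in>UNIV. (\<Sum>l\<in>UNIV. H p l * A l) * G p j) = (\<Sum>p\<in>UNIV. \<Sum>l\<in>UNIV. H p l * A l * G p j)"
    by (simp add: sum_distrib_right)
  also have "\<dots> = (\<Sum>l\<in>UNIV. \<Sum>p\<in>UNIV. H p l * A l * G p j)" by (rule sum.swap)
  also have "\<dots> = (\<Sum>l\<in>UNIV. A l * (\<Sum>p\<in>UNIV. H l p * G p j))"
    by (simp add: sum_distrib_left Hs algebra_simps)
  also have "\<dots> = A j" by (simp add: HG dsum1)
  finally show ?thesis .
qed

lemma contract2: "(\<Sum>k\<in>UNIV. H i k * (\<Sum>l\<in>UNIV. G k l * Y l)) = Y i"
proof -
  have "(\<Sum>k\<in>UNIV. H i k * (\<Sum>l\<in>UNIV. G k l * Y l)) = (\<Sum>k\<in>UNIV. \<Sum>l\<in>UNIV. H i k * G k l * Y l)"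
    by (simp add: sum_distrib_left algebra_simps)
  also have "\<dots> = (\<Sum>l\<in>UNIV. \<Sum>k\<in>UNIV. H i k * G k l * Y l)" by (rule sum.swap)
  also have "\<dots> = (\<Sum>l\<in>UNIV. (\<Sum>k\<in>UNIV. H i k * G k l) * Y l)"
    by (simp add: sum_distrib_right)
  also have "\<dots> = Y i" by (simp add: HG dsum2)
  finally show ?thesis .
qed

lemma GamG: "(\<Sum>p\<in>UNIV. Gam p i k * G p j) = C i k j"
  unfolding Gam_C by (rule contract1)

lemma Gamth: "(\<Sum>p\<in>UNIV. Gam p i k * th p) = (\<Sum>m\<in>UNIV. X m * C i k m)"
proof -
  have "(\<Sum>p\<in>UNIV. Gam p i k * th p) = (\<Sum>p\<in>UNIV. \<Sum>m\<in>UNIV. Gam p i k * G p m * X m)"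
    unfolding th_def by (simp add: sum_distrib_left algebra_simps)
  also have "\<dots> = (\<Sum>m\<in>UNIV. \<Sum>p\<in>UNIV. Gam p i k * G p m * X m)" by (rule sum.swap)
  also have "\<dots> = (\<Sum>m\<in>UNIV. (\<Sum>p\<in>UNIV. Gam p i k * G p m) * X m)"
    by (simp add: sum_distrib_right)
  also have "\<dots> = (\<Sum>m\<in>UNIV. X m * C i k m)" by (rule sum.cong) (simp_all add: GamG)
  finally show ?thesis .
qed

lemma Hth: "(\<Sum>k\<in>UNIV. H i k * th k) = X i"
  unfolding th_def by (rule contract2)

lemma trHG: "(\<Sum>i\<in>UNIV. \<Sum>k\<in>UNIV. H i k * G i k) = real CARD('n)"
proof -
  have "\<And>i. (\<Sum>k\<in>UNIV. H i k * G i k) = 1"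
  proof -
    fix i
    have "(\<Sum>k\<in>UNIV. H i k * G i k) = (\<Sum>k\<in>UNIV. H i k * G k i)"
      by (rule sum.cong) (simp_all add: Gs[of i])
    then show "(\<Sum>k\<in>UNIV. H i k * G i k) = 1" by (simp add: HG)
  qed
  then show ?thesis by simp
qed

lemma f_alt: "f = (\<Sum>j\<in>UNIV. X j * th j)"
  unfolding f_def th_def by (simp add: sum_distrib_left algebra_simps)

lemma compat: "dg i k j - C i k j - C i j k = 0"
  unfolding C_def using dgs[of i j k] by (simp add: algebra_simps)

lemma NN: "N i k + N k i = L i k"
proof -
  have "N i k + N k i = (\<Sum>l\<in>UNIV. dg i k l * X l + G k l * dX i l + (dg k i l * X l + G i l * dX k l) - X l * (C i k l + C k i l))"
    unfolding N_def dth_def by (simp add: sum.distrib sum_subtractf algebra_simps)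
  also have "\<dots> = (\<Sum>l\<in>UNIV. X l * dg l i k + G l k * dX i l + G i l * dX k l)"
    apply (rule sum.cong, simp)
    unfolding C_def using dgs Gs by (simp add: algebra_simps)
  finally show ?thesis unfolding L_def .
qed

lemma trace: "(\<Sum>i\<in>UNIV. dX i i + (\<Sum>k\<in>UNIV. Gam i i k * X k))
   = 1/2 * (\<Sum>i\<in>UNIV. \<Sum>k\<in>UNIV. H i k * L i k)"
proof -
  have sw: "(\<Sum>i\<in>UNIV. \<Sum>l\<in>UNIV. H i l * dg i k l) = (\<Sum>i\<in>UNIV. \<Sum>l\<in>UNIV. H i l * dg l i k)" for k
  proof -
    have "(\<Sum>i\<in>UNIV. \<Sum>l\<in>UNIV. H i l * dg i k l) = (\<Sum>l\<in>UNIV. \<Sum>i\<in>UNIV. H i l * dg i k l)"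
      by (rule sum.swap)
    also have "\<dots> = (\<Sum>i\<in>UNIV. \<Sum>l\<in>UNIV. H i l * dg l i k)"
      by (intro sum.cong refl) (simp only: Hs dgs[of _ k])
    finally show ?thesis .
  qed
  have g1: "(\<Sum>i\<in>UNIV. Gam i i k) = 1/2 * (\<Sum>i\<in>UNIV. \<Sum>l\<in>UNIV. H i l * dg k i l)" for k
  proof -
    have "(\<Sum>i\<in>UNIV. Gam i i k) = 1/2 * ((\<Sum>i\<in>UNIV. \<Sum>l\<in>UNIV. H i l * dg i k l)
       + (\<Sum>i\<in>UNIV. \<Sum>l\<in>UNIV. H i l * dg k i l) - (\<Sum>i\<in>UNIV. \<Sum>l\<in>UNIV. H i l * dg l i k))"
      unfolding Gam_def by (simp add: sum_distrib_left sum.distrib sum_subtractf algebra_simps)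
    then show ?thesis using sw[of k] by simp
  qed
  have lhs: "(\<Sum>i\<in>UNIV. dX i i + (\<Sum>k\<in>UNIV. Gam i i k * X k))
     = (\<Sum>i\<in>UNIV. dX i i) + (\<Sum>k\<in>UNIV. X k * (\<Sum>i\<in>UNIV. Gam i i k))"
  proof -
    have "(\<Sum>i\<in>UNIV. \<Sum>k\<in>UNIV. Gam i i k * X k) = (\<Sum>k\<in>UNIV. \<Sum>i\<in>UNIV. Gam i i k * X k)"
      by (rule sum.swap)
    also have "\<dots> = (\<Sum>k\<in>UNIV. X k * (\<Sum>i\<in>UNIV. Gam i i k))"
      by (simp add: sum_distrib_left mult.commute)
    finally show ?thesis by (simp add: sum.distrib)
  qed
  have r1: "(\<Sum>i\<in>UNIV. \<Sum>k\<in>UNIV. H i k * (\<Sum>m\<in>UNIV. X m * dg m i k))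
      = (\<Sum>m\<in>UNIV. X m * (\<Sum>i\<in>UNIV. \<Sum>k\<in>UNIV. H i k * dg m i k))"
  proof -
    have "(\<Sum>i\<in>UNIV. \<Sum>k\<in>UNIV. H i k * (\<Sum>m\<in>UNIV. X m * dg m i k))
       = (\<Sum>i\<in>UNIV. \<Sum>k\<in>UNIV. \<Sum>m\<in>UNIV. X m * (H i k * dg m i k))"
      by (simp add: sum_distrib_left algebra_simps)
    also have "\<dots> = (\<Sum>i\<in>UNIV. \<Sum>m\<in>UNIV. \<Sum>k\<in>UNIV. X m * (H i k * dg m i k))"
      by (rule sum.cong, simp, rule sum.swap)
    also have "\<dots> = (\<Sum>m\<in>UNIV. \<Sum>i\<in>UNIV. \<Sum>k\<in>UNIV. X m * (H i k * dg m i k))"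
      by (rule sum.swap)
    also have "\<dots> = (\<Sum>m\<in>UNIV. X m * (\<Sum>i\<in>UNIV. \<Sum>k\<in>UNIV. H i k * dg m i k))"
      by (simp add: sum_distrib_left)
    finally show ?thesis .
  qed
  have r2: "(\<Sum>i\<in>UNIV. \<Sum>k\<in>UNIV. H i k * (\<Sum>m\<in>UNIV. G m k * dX i m)) = (\<Sum>i\<in>UNIV. dX i i)"
  proof -
    have "(\<Sum>k\<in>UNIV. H i k * (\<Sum>m\<in>UNIV. G m k * dX i m)) = dX i i" for i
      using contract2[of i "dX i"] Gs by simp
    then show ?thesis by simp
  qed
  have r3: "(\<Sum>i\<in>UNIV. \<Sum>k\<in>UNIV. H i k * (\<Sum>m\<in>UNIV. G i m * dX k m)) = (\<Sum>i\<in>UNIV. dX i i)"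
  proof -
    have "(\<Sum>i\<in>UNIV. \<Sum>k\<in>UNIV. H i k * (\<Sum>m\<in>UNIV. G i m * dX k m))
        = (\<Sum>k\<in>UNIV. \<Sum>i\<in>UNIV. H k i * (\<Sum>m\<in>UNIV. G i m * dX k m))"
      by (subst sum.swap) (simp add: Hs)
    also have "\<dots> = (\<Sum>k\<in>UNIV. dX k k)"
      using contract2 by simp
    finally show ?thesis .
  qed
  have "(\<Sum>i\<in>UNIV. \<Sum>k\<in>UNIV. H i k * L i k) =
     (\<Sum>i\<in>UNIV. \<Sum>k\<in>UNIV. H i k * (\<Sum>m\<in>UNIV. X m * dg m i k))
   + (\<Sum>i\<in>UNIV. \<Sum>k\<in>UNIV. H i k * (\<Sum>m\<in>UNIV. G m k * dX i m))
   + (\<Sum>i\<in>UNIV. \<Sum>k\<in>UNIV. H i k * (\<Sum>m\<in>UNIV. G i m * dX k m))"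
    unfolding L_def by (simp add: sum.distrib distrib_left)
  then show ?thesis using lhs r1 r2 r3 g1 by (simp add: sum_distrib_left algebra_simps)
qed

lemma halfHL:
  assumes sol: "\<And>k j. 1/2 * L k j = \<gamma> * G k j + \<delta> * th k * th j"
  shows "1/2 * (\<Sum>i\<in>UNIV. \<Sum>k\<in>UNIV. H i k * L i k) = real CARD('n) * \<gamma> + \<delta> * f"
proof -
  have "1/2 * (\<Sum>i\<in>UNIV. \<Sum>k\<in>UNIV. H i k * L i k) = (\<Sum>i\<in>UNIV. \<Sum>k\<in>UNIV. H i k * (1/2 * L i k))"
    by (simp add: sum_distrib_left algebra_simps)
  also have "\<dots> = (\<Sum>i\<in>UNIV. \<Sum>k\<in>UNIV. \<gamma> * (H i k * G i k) + \<delta> * th i * (H i k * th k))"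
    apply (intro sum.cong refl)
    apply (simp only: sol)
    by (simp add: algebra_simps)
  also have "\<dots> = \<gamma> * (\<Sum>i\<in>UNIV. \<Sum>k\<in>UNIV. H i k * G i k) + \<delta> * (\<Sum>i\<in>UNIV. th i * (\<Sum>k\<in>UNIV. H i k * th k))"
    by (simp add: sum.distrib sum_distrib_left mult.assoc)
  also have "\<dots> = real CARD('n) * \<gamma> + \<delta> * f"
    using trHG by (simp add: Hth f_alt mult.commute)
  finally show ?thesis .
qed

lemma Qeq: "(\<Sum>i\<in>UNIV. \<Sum>k\<in>UNIV. H i k * N i k) = 1/2 * (\<Sum>i\<in>UNIV. \<Sum>k\<in>UNIV. H i k * L i k)"
proof -
  have sw: "(\<Sum>i\<in>UNIV. \<Sum>k\<in>UNIV. H i k * N k i) = (\<Sum>i\<in>UNIV. \<Sum>k\<in>UNIV. H i k * N i k)"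
    by (subst sum.swap) (simp add: Hs)
  have "(\<Sum>i\<in>UNIV. \<Sum>k\<in>UNIV. H i k * L i k) = (\<Sum>i\<in>UNIV. \<Sum>k\<in>UNIV. H i k * N i k) + (\<Sum>i\<in>UNIV. \<Sum>k\<in>UNIV. H i k * N k i)"
    by (simp add: NN[symmetric] distrib_left sum.distrib)
  then show ?thesis using sw by simp
qed

lemma cov:
  assumes sol: "\<And>k j. 1/2 * L k j = \<gamma> * G k j + \<delta> * th k * th j"
  shows "(2*\<gamma>*dg i k j + 2*\<delta>*(dth i k * th j + th k * dth i j)) - (\<Sum>p\<in>UNIV. Gam p i k * L p j + Gam p i j * L k p)
     = 2*\<delta>*(N i k * th j + th k * N i j)"
proof -
  have Le: "L a b = 2 * \<gamma> * G a b + 2 * \<delta> * th a * th b" for a b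
    using sol[of a b] by simp
  have s1: "(\<Sum>p\<in>UNIV. Gam p i k * L p j) = 2*\<gamma>*C i k j + 2*\<delta>*(\<Sum>m\<in>UNIV. X m * C i k m) * th j"
  proof -
    have "(\<Sum>p\<in>UNIV. Gam p i k * L p j) = 2*\<gamma>*(\<Sum>p\<in>UNIV. Gam p i k * G p j) + 2*\<delta>*(\<Sum>p\<in>UNIV. Gam p i k * th p) * th j"
      by (simp add: Le sum.distrib sum_distrib_left sum_distrib_right algebra_simps)
    then show ?thesis by (simp add: GamG Gamth)
  qed
  have s2: "(\<Sum>p\<in>UNIV. Gam p i j * L k p) = 2*\<gamma>*C i j k + 2*\<delta>*th k*(\<Sum>m\<in>UNIV. X m * C i j m)"
  proof -
    have "(\<Sum>p\<in>UNIV. Gam p i j * L k p) = 2*\<gamma>*(\<Sum>p\<in>UNIV. Gam p i j * G p k) + 2*\<delta>*th k*(\<Sum>p\<in>UNIV. Gam p i j * th p)"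
      by (simp add: Le Gs[of k] sum.distrib sum_distrib_left sum_distrib_right algebra_simps)
    then show ?thesis by (simp add: GamG Gamth)
  qed
  have "(\<Sum>p\<in>UNIV. Gam p i k * L p j + Gam p i j * L k p) = (\<Sum>p\<in>UNIV. Gam p i k * L p j) + (\<Sum>p\<in>UNIV. Gam p i j * L k p)"
    by (simp add: sum.distrib)
  then show ?thesis using s1 s2 compat[of i k j] unfolding N_def by (simp add: algebra_simps)
qed

lemma harmLHS:
  assumes sol: "\<And>k j. 1/2 * L k j = \<gamma> * G k j + \<delta> * th k * th j"
  shows "(\<Sum>i\<in>UNIV. \<Sum>k\<in>UNIV. H i k * ((2*\<gamma>*dg i k j + 2*\<delta>*(dth i k * th j + th k * dth i j)) - (\<Sum>p\<in>UNIV. Gam p i k * L p j + Gam p i j * L k p)))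
    = 2*\<delta>*((\<Sum>i\<in>UNIV. \<Sum>k\<in>UNIV. H i k * N i k) * th j + (\<Sum>i\<in>UNIV. X i * N i j))"
proof -
  have "(\<Sum>i\<in>UNIV. \<Sum>k\<in>UNIV. H i k * ((2*\<gamma>*dg i k j + 2*\<delta>*(dth i k * th j + th k * dth i j)) - (\<Sum>p\<in>UNIV. Gam p i k * L p j + Gam p i j * L k p)))
     = (\<Sum>i\<in>UNIV. \<Sum>k\<in>UNIV. 2*\<delta>*(H i k * N i k * th j) + 2*\<delta>*(N i j * (H i k * th k)))"
    apply (intro sum.cong refl)
    apply (simp only: cov[OF sol])
    by (simp add: algebra_simps)
  also have "\<dots> = 2*\<delta>*((\<Sum>i\<in>UNIV. \<Sum>k\<in>UNIV. H i k * N i k) * th j + (\<Sum>i\<in>UNIV. N i j * (\<Sum>k\<in>UNIV. H i k * th k)))"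
    by (simp add: sum.distrib sum_distrib_left sum_distrib_right algebra_simps)
  also have "\<dots> = 2*\<delta>*((\<Sum>i\<in>UNIV. \<Sum>k\<in>UNIV. H i k * N i k) * th j + (\<Sum>i\<in>UNIV. X i * N i j))"
    by (simp add: Hth mult.commute)
  finally show ?thesis .
qed

lemma swap_in: "(\<Sum>i\<in>UNIV. \<Sum>j\<in>UNIV. \<Sum>l\<in>UNIV. F i j l) = (\<Sum>i\<in>UNIV. \<Sum>l\<in>UNIV. \<Sum>j\<in>UNIV. (F i j l::real))"
  by (rule sum.cong[OF refl], rule sum.swap)

lemma Pid: "2 * (\<Sum>j\<in>UNIV. X j * (\<Sum>i\<in>UNIV. X i * N i j))
   = (\<Sum>j\<in>UNIV. X j * (\<Sum>a\<in>UNIV. \<Sum>b\<in>UNIV. dg j a b * X a * X b + G a b * (dX j a * X b + X a * dX j b)))"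
proof -
  define S where "S = (\<Sum>i\<in>UNIV. \<Sum>j\<in>UNIV. \<Sum>l\<in>UNIV. X i * X j * X l * dg i j l)"
  define T where "T = (\<Sum>i\<in>UNIV. \<Sum>j\<in>UNIV. \<Sum>l\<in>UNIV. X i * X j * G j l * dX i l)"
  define U where "U = (\<Sum>i\<in>UNIV. \<Sum>j\<in>UNIV. \<Sum>l\<in>UNIV. X i * X j * X l * C i j l)"
  have A1: "(\<Sum>j\<in>UNIV. X j * (\<Sum>i\<in>UNIV. X i * N i j)) = (\<Sum>i\<in>UNIV. \<Sum>j\<in>UNIV. X i * X j * N i j)"
    by (subst sum.swap) (simp add: sum_distrib_left algebra_simps)
  have A2: "(\<Sum>i\<in>UNIV. \<Sum>j\<in>UNIV. X i * X j * N i j) = S + T - U"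
    unfolding S_def T_def U_def N_def dth_def
    by (simp add: sum_distrib_left sum.distrib sum_subtractf algebra_simps)
  have S2: "(\<Sum>i\<in>UNIV. \<Sum>j\<in>UNIV. \<Sum>l\<in>UNIV. X i * X j * X l * dg j i l) = S"
    unfolding S_def by (subst sum.swap) (simp add: algebra_simps)
  have S3: "(\<Sum>i\<in>UNIV. \<Sum>j\<in>UNIV. \<Sum>l\<in>UNIV. X i * X j * X l * dg l i j) = S"
  proof -
    have "(\<Sum>i\<in>UNIV. \<Sum>j\<in>UNIV. \<Sum>l\<in>UNIV. X i * X j * X l * dg l i j)
       = (\<Sum>i\<in>UNIV. \<Sum>l\<in>UNIV. \<Sum>j\<in>UNIV. X i * X j * X l * dg l i j)" by (rule swap_in)
    also have "\<dots> = (\<Sum>l\<in>UNIV. \<Sum>i\<in>UNIV. \<Sum>j\<in>UNIV. X i * X j * X l * dg l i j)" by (rule sum.swap)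
    also have "\<dots> = S" unfolding S_def by (simp add: algebra_simps)
    finally show ?thesis .
  qed
  have U2: "2 * U = S"
  proof -
    have "2 * U = S + (\<Sum>i\<in>UNIV. \<Sum>j\<in>UNIV. \<Sum>l\<in>UNIV. X i * X j * X l * dg j i l)
         - (\<Sum>i\<in>UNIV. \<Sum>j\<in>UNIV. \<Sum>l\<in>UNIV. X i * X j * X l * dg l i j)"
      unfolding U_def S_def C_def by (simp add: sum_distrib_left sum.distrib sum_subtractf algebra_simps)
    then show ?thesis using S2 S3 by simp
  qed
  have T1: "(\<Sum>j\<in>UNIV. \<Sum>a\<in>UNIV. \<Sum>b\<in>UNIV. X j * (G a b * (dX j a * X b))) = T"
  proof -
    have "(\<Sum>j\<in>UNIV. \<Sum>a\<in>UNIV. \<Sum>b\<in>UNIV. X j * (G a b * (dX j a * X b)))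
       = (\<Sum>j\<in>UNIV. \<Sum>b\<in>UNIV. \<Sum>a\<in>UNIV. X j * (G a b * (dX j a * X b)))" by (rule swap_in)
    also have "\<dots> = T" unfolding T_def
      by (intro sum.cong refl) (simp add: Gs[of _ "_::'n"] algebra_simps)
    finally show ?thesis .
  qed
  have T2: "(\<Sum>j\<in>UNIV. \<Sum>a\<in>UNIV. \<Sum>b\<in>UNIV. X j * (G a b * (X a * dX j b))) = T"
    unfolding T_def by (intro sum.cong refl) (simp add: algebra_simps)
  have R: "(\<Sum>j\<in>UNIV. X j * (\<Sum>a\<in>UNIV. \<Sum>b\<in>UNIV. dg j a b * X a * X b + G a b * (dX j a * X b + X a * dX j b)))
     = S + (\<Sum>j\<in>UNIV. \<Sum>a\<in>UNIV. \<Sum>b\<in>UNIV. X j * (G a b * (dX j a * X b)))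
         + (\<Sum>j\<in>UNIV. \<Sum>a\<in>UNIV. \<Sum>b\<in>UNIV. X j * (G a b * (X a * dX j b)))"
    unfolding S_def by (simp add: sum_distrib_left sum.distrib distrib_left algebra_simps)
  show ?thesis using A1 A2 U2 T1 T2 R by simp
qed

lemma final:
  assumes sol: "\<And>k j. 1/2 * L k j = \<gamma> * G k j + \<delta> * th k * th j"
    and harm: "\<And>j. (\<Sum>i\<in>UNIV. \<Sum>k\<in>UNIV. H i k * ((2*\<gamma>*dg i k j + 2*\<delta>*(dth i k * th j + th k * dth i j)) - (\<Sum>p\<in>UNIV. Gam p i k * L p j + Gam p i j * L k p)))
        = \<delta> * (\<Sum>a\<in>UNIV. \<Sum>b\<in>UNIV. dg j a b * X a * X b + G a b * (dX j a * X b + X a * dX j b))"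
  shows "\<delta> * ((real CARD('n) * \<gamma> + \<delta> * f) * f) = 0"
proof -
  define Q where "Q = (\<Sum>i\<in>UNIV. \<Sum>k\<in>UNIV. H i k * N i k)"
  define P where "P = (\<Sum>j\<in>UNIV. X j * (\<Sum>i\<in>UNIV. X i * N i j))"
  have hj: "2*\<delta>*(Q * th j + (\<Sum>i\<in>UNIV. X i * N i j))
      = \<delta> * (\<Sum>a\<in>UNIV. \<Sum>b\<in>UNIV. dg j a b * X a * X b + G a b * (dX j a * X b + X a * dX j b))" for j
    using harm[of j] harmLHS[OF sol, of j] unfolding Q_def by simp
  have "(\<Sum>j\<in>UNIV. X j * (2*\<delta>*(Q * th j + (\<Sum>i\<in>UNIV. X i * N i j))))
     = (\<Sum>j\<in>UNIV. X j * (\<delta> * (\<Sum>a\<in>UNIV. \<Sum>b\<in>UNIV. dg j a b * X a * X b + G a b * (dX j a * X b + X a * dX j b))))"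
    by (rule sum.cong[OF refl]) (simp only: hj)
  moreover have "(\<Sum>j\<in>UNIV. X j * (2*\<delta>*(Q * th j + (\<Sum>i\<in>UNIV. X i * N i j)))) = 2*\<delta>*Q*f + 2*\<delta>*P"
    unfolding P_def f_alt by (simp add: sum.distrib sum_distrib_left algebra_simps)
  moreover have "(\<Sum>j\<in>UNIV. X j * (\<delta> * (\<Sum>a\<in>UNIV. \<Sum>b\<in>UNIV. dg j a b * X a * X b + G a b * (dX j a * X b + X a * dX j b))))
     = \<delta> * (2 * P)"
    unfolding P_def Pid by (simp add: sum_distrib_left algebra_simps)
  ultimately have "\<delta> * (Q * f) = 0" by (simp add: algebra_simps)
  moreover have "Q = real CARD('n) * \<gamma> + \<delta> * f"
    unfolding Q_def Qeq using halfHL[OF sol] .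
  ultimately show ?thesis by simp
qed

end


lemma metric_inv:
  assumes "riemannian_metric_on U g" "y \<in> U"
  shows "\<And>i j. (\<Sum>k\<in>UNIV. ginv g y i k * g y $ k $ j) = (if i = j then 1 else 0)"
    and "\<And>i j. ginv g y i j = ginv g y j i"
proof -
  have pos: "\<And>v. v \<noteq> 0 \<Longrightarrow> v \<bullet> (g y *v v) > 0" and sym: "\<And>i j. g y $ i $ j = g y $ j $ i"
    using assms unfolding riemannian_metric_on_def by auto
  have "\<forall>v. g y *v v = 0 \<longrightarrow> v = 0"
    using pos by (metis inner_zero_right less_irrefl)
  then have "invertible (g y)"
    using matrix_left_invertible_ker invertible_left_inverse by blast
  then have inv: "g y ** matrix_inv (g y) = mat 1 \<and> matrix_inv (g y) ** g y = mat 1"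
    unfolding invertible_def matrix_inv_def by (rule someI_ex)
  show "(\<Sum>k\<in>UNIV. ginv g y i k * g y $ k $ j) = (if i = j then 1 else 0)" for i j
  proof -
    have "(matrix_inv (g y) ** g y) $ i $ j = mat 1 $ i $ j" using inv by simp
    then show ?thesis unfolding ginv_def matrix_matrix_mult_def mat_def by simp
  qed
  have tG: "transpose (g y) = g y"
    unfolding transpose_def using sym by (simp add: vec_eq_iff)
  have "transpose (matrix_inv (g y)) ** g y = mat 1"
    using inv by (metis matrix_transpose_mul tG transpose_mat)
  then have "transpose (matrix_inv (g y)) = matrix_inv (g y)"
    using inv by (metis matrix_mul_assoc matrix_mul_lid matrix_mul_rid)
  then show "ginv g y i j = ginv g y j i" for i j
    unfolding ginv_def transpose_def by (metis vec_lambda_beta)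
qed

definition nsq :: "('n::finite pt \<Rightarrow> real^'n^'n) \<Rightarrow> ('n pt \<Rightarrow> real^'n) \<Rightarrow> 'n pt \<Rightarrow> real" where
  "nsq g \<xi> y = (\<Sum>a\<in>UNIV. \<Sum>b\<in>UNIV. g y $ a $ b * \<xi> y $ a * \<xi> y $ b)"

lemma alg_at:
  assumes "open U" "riemannian_metric_on U g" "y \<in> U"
  shows "alg (\<lambda>i j. g y $ i $ j) (ginv g y) (\<lambda>i j k. pd i (\<lambda>z. g z $ j $ k) y)"
proof
  have sym: "\<And>z i j. z \<in> U \<Longrightarrow> g z $ i $ j = g z $ j $ i"
    using assms unfolding riemannian_metric_on_def by auto
  show "g y $ i $ j = g y $ j $ i" for i j using sym assms(3) by blast
  show "ginv g y i j = ginv g y j i" for i j using metric_inv[OF assms(2,3)] by blast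
  show "(\<Sum>k\<in>UNIV. ginv g y i k * g y $ k $ j) = (if i = j then 1 else 0)" for i j
    using metric_inv[OF assms(2,3)] by blast
  show "pd i (\<lambda>z. g z $ j $ k) y = pd i (\<lambda>z. g z $ k $ j) y" for i j k
    by (rule pd_local[OF assms(1,3)]) (rule sym)
qed

lemma sharp_flat:
  assumes "open U" "riemannian_metric_on U g" "y \<in> U"
  shows "sharp g (flat g \<xi>) y = \<xi> y"
proof -
  interpret a: alg "\<lambda>i j. g y $ i $ j" "ginv g y" "\<lambda>i j k. pd i (\<lambda>z. g z $ j $ k) y" "\<lambda>k. \<xi> y $ k" "\<lambda>i k. 0"
    by (rule alg_at[OF assms])
  show ?thesis unfolding sharp_def flat_def
    by (simp add: vec_eq_iff a.contract2)
qed

lemma xi'_facts: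
  assumes "open U" "riemannian_metric_on U g" "y \<in> U"
  shows "pd i (\<lambda>z. sharp g (flat g \<xi>) z $ k) y = pd i (\<lambda>z. \<xi> z $ k) y"
    and "lie_g g (sharp g (flat g \<xi>)) y = lie_g g \<xi> y"
    and "div_vf g (sharp g (flat g \<xi>)) y = div_vf g \<xi> y"
proof -
  have pdx: "pd i (\<lambda>z. sharp g (flat g \<xi>) z $ k) y = pd i (\<lambda>z. \<xi> z $ k) y" for i k
    by (rule pd_local[OF assms(1,3)]) (simp add: sharp_flat[OF assms(1,2)])
  then show "pd i (\<lambda>z. sharp g (flat g \<xi>) z $ k) y = pd i (\<lambda>z. \<xi> z $ k) y" .
  show "lie_g g (sharp g (flat g \<xi>)) y = lie_g g \<xi> y"
    unfolding lie_g_def by (simp add: pdx sharp_flat[OF assms])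
  show "div_vf g (sharp g (flat g \<xi>)) y = div_vf g \<xi> y"
    unfolding div_vf_def by (simp add: pdx sharp_flat[OF assms])
qed

lemma divF:
  fixes U :: "'n::finite pt set"
  assumes "open U" "riemannian_metric_on U g" "y \<in> U" "xi_flat_yamabe_soliton U g \<xi> \<gamma> \<delta>"
  shows "div_vf g \<xi> y = real CARD('n) * \<gamma> + \<delta> * nsq g \<xi> y"
proof -
  interpret a: alg "\<lambda>i j. g y $ i $ j" "ginv g y" "\<lambda>i j k. pd i (\<lambda>z. g z $ j $ k) y" "\<lambda>k. \<xi> y $ k" "\<lambda>i k. pd i (\<lambda>z. \<xi> z $ k) y"
    by (rule alg_at[OF assms(1-3)])
  have sol: "1/2 * a.L k j = \<gamma> * g y $ k $ j + \<delta> * a.th k * a.th j" for k j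
    using assms(3,4) unfolding xi_flat_yamabe_soliton_def a.L_def a.th_def lie_g_def flat_def by simp
  have "div_vf g \<xi> y = (\<Sum>i\<in>UNIV. pd i (\<lambda>z. \<xi> z $ i) y + (\<Sum>k\<in>UNIV. a.Gam i i k * \<xi> y $ k))"
    unfolding div_vf_def a.Gam_def christoffel_def by simp
  also have "\<dots> = real CARD('n) * \<gamma> + \<delta> * a.f"
    using a.trace a.halfHL[OF sol] by simp
  finally show ?thesis unfolding a.f_def nsq_def .
qed

lemma harmF:
  fixes U :: "'n::finite pt set"
  assumes U: "open U" and rm: "riemannian_metric_on U g" and x: "x \<in> U"
    and sv: "smooth_vf_on U \<xi>"
    and sol: "xi_flat_yamabe_soliton U g \<xi> \<gamma> \<delta>"
    and hm: "schroedinger_ricci_harmonic U g (flat g \<xi>)"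
  shows "\<delta> * ((real CARD('n) * \<gamma> + \<delta> * nsq g \<xi> x) * nsq g \<xi> x) = 0"
proof -
  interpret a: alg "\<lambda>i j. g x $ i $ j" "ginv g x" "\<lambda>i j k. pd i (\<lambda>z. g z $ j $ k) x" "\<lambda>k. \<xi> x $ k" "\<lambda>i k. pd i (\<lambda>z. \<xi> z $ k) x"
    by (rule alg_at[OF U rm x])
  define \<xi>' where "\<xi>' = sharp g (flat g \<xi>)"
  have gdiff: "(\<lambda>y. g y $ k $ j) differentiable (at x)" for k j
    using rm U x unfolding riemannian_metric_on_def by (auto intro: smooth_diff)
  have xdiff: "(\<lambda>y. \<xi> y $ k) differentiable (at x)" for k
    using sv U x unfolding smooth_vf_on_def by (auto intro: smooth_diff)
  have gd: "((\<lambda>t. g (x + t *\<^sub>R axis i 1) $ k $ j) has_real_derivative pd i (\<lambda>y. g y $ k $ j) x) (at 0)" for i k j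
    using pd_has[OF gdiff[of k j], of i] by simp
  have xd: "((\<lambda>t. \<xi> (x + t *\<^sub>R axis i 1) $ k) has_real_derivative pd i (\<lambda>y. \<xi> y $ k) x) (at 0)" for i k
    using pd_has[OF xdiff[of k], of i] by simp
  have thd: "((\<lambda>t. \<Sum>l\<in>UNIV. g (x + t *\<^sub>R axis i 1) $ k $ l * \<xi> (x + t *\<^sub>R axis i 1) $ l) has_real_derivative a.dth i k) (at 0)" for i k
    unfolding a.dth_def
    by (rule Dsum, rule Dmul[OF gd xd]) simp_all
  have sol': "1/2 * a.L k j = \<gamma> * g x $ k $ j + \<delta> * a.th k * a.th j" for k j
    using x sol unfolding xi_flat_yamabe_soliton_def a.L_def a.th_def lie_g_def flat_def by simp
  have Lx: "lie_g g \<xi>' x $ k $ j = a.L k j" for k j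
    unfolding \<xi>'_def xi'_facts[OF U rm x] a.L_def lie_g_def by (simp add: sharp_flat[OF U rm x])
  have pdL: "pd i (\<lambda>y. lie_g g \<xi>' y $ k $ j) x
     = 2*\<gamma>*pd i (\<lambda>y. g y $ k $ j) x + 2*\<delta>*(a.dth i k * a.th j + a.th k * a.dth i j)" for i k j
  proof -
    have "pd i (\<lambda>y. lie_g g \<xi>' y $ k $ j) x
        = pd i (\<lambda>y. 2 * (\<gamma> * g y $ k $ j + \<delta> * (\<Sum>l\<in>UNIV. g y $ k $ l * \<xi> y $ l) * (\<Sum>l\<in>UNIV. g y $ j $ l * \<xi> y $ l))) x"
    proof (rule pd_local[OF U x])
      fix y assume y: "y \<in> U"
      have "1/2 * lie_g g \<xi> y $ k $ j = \<gamma> * g y $ k $ j + \<delta> * flat g \<xi> y $ k * flat g \<xi> y $ j"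
        using sol y unfolding xi_flat_yamabe_soliton_def by blast
      then show "lie_g g \<xi>' y $ k $ j = 2 * (\<gamma> * g y $ k $ j + \<delta> * (\<Sum>l\<in>UNIV. g y $ k $ l * \<xi> y $ l) * (\<Sum>l\<in>UNIV. g y $ j $ l * \<xi> y $ l))"
        unfolding \<xi>'_def xi'_facts[OF U rm y] flat_def by simp
    qed
    also have "\<dots> = 2*\<gamma>*pd i (\<lambda>y. g y $ k $ j) x + 2*\<delta>*(a.dth i k * a.th j + a.th k * a.dth i j)"
      apply (rule pd_eq)
      apply (rule DERIV_cong)
       apply (rule DERIV_cmult)
       apply (rule DERIV_add)
        apply (rule DERIV_cmult)
        apply (rule gd)
       apply (rule Dmul[OF DERIV_cmult[OF thd] thd])
        apply (simp add: a.th_def)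
       apply (simp add: a.th_def)
      by (simp add: a.th_def algebra_simps)
    finally show ?thesis .
  qed
  have pdD: "pd j (div_vf g \<xi>') x
     = \<delta> * (\<Sum>a\<in>UNIV. \<Sum>b\<in>UNIV. pd j (\<lambda>y. g y $ a $ b) x * \<xi> x $ a * \<xi> x $ b
          + g x $ a $ b * (pd j (\<lambda>y. \<xi> y $ a) x * \<xi> x $ b + \<xi> x $ a * pd j (\<lambda>y. \<xi> y $ b) x))" for j
  proof -
    have "pd j (div_vf g \<xi>') x = pd j (\<lambda>y. real CARD('n) * \<gamma> + \<delta> * (\<Sum>a\<in>UNIV. \<Sum>b\<in>UNIV. g y $ a $ b * \<xi> y $ a * \<xi> y $ b)) x"
    proof (rule pd_local[OF U x])
      fix y assume y: "y \<in> U"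
      show "div_vf g \<xi>' y = real CARD('n) * \<gamma> + \<delta> * (\<Sum>a\<in>UNIV. \<Sum>b\<in>UNIV. g y $ a $ b * \<xi> y $ a * \<xi> y $ b)"
        unfolding \<xi>'_def xi'_facts[OF U rm y] divF[OF U rm y sol] nsq_def ..
    qed
    also have "\<dots> = \<delta> * (\<Sum>a\<in>UNIV. \<Sum>b\<in>UNIV. pd j (\<lambda>y. g y $ a $ b) x * \<xi> x $ a * \<xi> x $ b
          + g x $ a $ b * (pd j (\<lambda>y. \<xi> y $ a) x * \<xi> x $ b + \<xi> x $ a * pd j (\<lambda>y. \<xi> y $ b) x))"
      apply (rule pd_eq)
      apply (rule DERIV_cong)
       apply (rule DERIV_add)
        apply (rule DERIV_const)
       apply (rule DERIV_cmult)
       apply (rule Dsum)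
       apply (rule Dsum)
       apply (rule Dmul[OF Dmul[OF gd xd] xd])
         apply simp_all
      by (simp add: algebra_simps)
    finally show ?thesis .
  qed
  have harm0: "div_T g (lie_g g \<xi>') x $ j = pd j (div_vf g \<xi>') x" for j
  proof -
    have "laplace_hodge g (flat g \<xi>) x + ric_sharp g (flat g \<xi>) x = 0"
      using hm x unfolding schroedinger_ricci_harmonic_def by blast
    then have "div_T g (lie_g g \<xi>') x - dfun (div_vf g \<xi>') x = 0"
      unfolding laplace_hodge_def \<xi>'_def by simp
    then show ?thesis unfolding dfun_def by (simp add: vec_eq_iff)
  qed
  have harm: "(\<Sum>i\<in>UNIV. \<Sum>k\<in>UNIV. ginv g x i k * ((2*\<gamma>*pd i (\<lambda>y. g y $ k $ j) x + 2*\<delta>*(a.dth i k * a.th j + a.th k * a.dth i j)) - (\<Sum>p\<in>UNIV. a.Gam p i k * a.L p j + a.Gam p i j * a.L k p)))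
        = \<delta> * (\<Sum>a\<in>UNIV. \<Sum>b\<in>UNIV. pd j (\<lambda>y. g y $ a $ b) x * \<xi> x $ a * \<xi> x $ b
          + g x $ a $ b * (pd j (\<lambda>y. \<xi> y $ a) x * \<xi> x $ b + \<xi> x $ a * pd j (\<lambda>y. \<xi> y $ b) x))" for j
  proof -
    have "div_T g (lie_g g \<xi>') x $ j = (\<Sum>i\<in>UNIV. \<Sum>k\<in>UNIV. ginv g x i k * ((2*\<gamma>*pd i (\<lambda>y. g y $ k $ j) x + 2*\<delta>*(a.dth i k * a.th j + a.th k * a.dth i j)) - (\<Sum>p\<in>UNIV. a.Gam p i k * a.L p j + a.Gam p i j * a.L k p)))"
      unfolding div_T_def cov_T_def by (simp add: pdL Lx a.Gam_def christoffel_def)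
    then show ?thesis using harm0[of j] pdD[of j] by simp
  qed
  show ?thesis
    using a.final[OF sol' harm] unfolding a.f_def nsq_def .
qed



lemma nsq_inner: "nsq g \<xi> y = \<xi> y \<bullet> (g y *v \<xi> y)"
  unfolding nsq_def inner_vec_def matrix_vector_mult_def
  by (simp add: sum_distrib_left algebra_simps)

lemma dsum3: fixes A :: "'a::finite \<Rightarrow> real" shows "(\<Sum>l\<in>UNIV. (if l = j then 1 else 0) * A l) = A j"
  using dsum1[of A j] by (simp add: mult.commute)

lemma pd_const: "pd i (\<lambda>y. c) x = 0"
  unfolding pd_def by (simp add: DERIV_imp_deriv)

theorem theorem3p14:
  fixes U :: "(real ^ 'n::finite) set"
    and g :: "real ^ 'n \<Rightarrow> real ^ 'n ^ 'n"
    and \<xi> :: "real ^ 'n \<Rightarrow> real ^ 'n"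
    and \<gamma> \<delta> :: real
  assumes "CARD('n) \<ge> 3"
    and "open U"
    and "riemannian_metric_on U g"
    and "smooth_vf_on U \<xi>"
    and "xi_flat_yamabe_soliton U g \<xi> \<gamma> \<delta>"
    and "schroedinger_ricci_harmonic U g (flat g \<xi>)"
  shows "\<delta> = 0 \<or> (\<forall>x\<in>U. div_vf g \<xi> x = 0)"
proof (cases "\<delta> = 0")
  case True then show ?thesis by simp
next
  case False
  note U = assms(2) and rm = assms(3) and sv = assms(4) and sol = assms(5) and hm = assms(6)
  have pos: "\<And>y v. y \<in> U \<Longrightarrow> v \<noteq> 0 \<Longrightarrow> v \<bullet> (g y *v v) > 0"
    using rm unfolding riemannian_metric_on_def by auto
  have prod0: "(real CARD('n) * \<gamma> + \<delta> * nsq g \<xi> y) * nsq g \<xi> y = 0" if "y \<in> U" for y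
    using harmF[OF U rm that sv sol hm] False by simp
  have "div_vf g \<xi> x = 0" if x: "x \<in> U" for x
  proof (cases "nsq g \<xi> x = 0")
    case False
    then show ?thesis using prod0[OF x] divF[OF U rm x sol] by simp
  next
    case f0: True
    have "\<gamma> = 0"
    proof (rule ccontr)
      assume g0: "\<gamma> \<noteq> 0"
      define c where "c = - real CARD('n) * \<gamma> / \<delta>"
      have c0: "c \<noteq> 0" using g0 \<open>\<delta> \<noteq> 0\<close> unfolding c_def by simp
      have vals: "nsq g \<xi> y = 0 \<or> nsq g \<xi> y = c" if "y \<in> U" for y
      proof -
        have "nsq g \<xi> y = 0 \<or> real CARD('n) * \<gamma> + \<delta> * nsq g \<xi> y = 0"
          using prod0[OF that] by (simp add: disj_commute)
        then show ?thesis using \<open>\<delta> \<noteq> 0\<close> unfolding c_def by (auto simp: field_simps)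
      qed
      have gc: "isCont (\<lambda>y. g y $ k $ j) x" for k j
        using rm U x unfolding riemannian_metric_on_def
        by (auto intro: differentiable_imp_continuous_within smooth_diff)
      have xc: "isCont (\<lambda>y. \<xi> y $ k) x" for k
        using sv U x unfolding smooth_vf_on_def
        by (auto intro: differentiable_imp_continuous_within smooth_diff)
      have "isCont (nsq g \<xi>) x"
        unfolding nsq_def by (intro continuous_intros gc xc)
      then obtain e1 where e1: "e1 > 0" "\<And>y. dist y x < e1 \<Longrightarrow> dist (nsq g \<xi> y) (nsq g \<xi> x) < \<bar>c\<bar>"
        using c0 unfolding continuous_at_eps_delta by (metis zero_less_abs_iff)
      obtain e2 where e2: "e2 > 0" "ball x e2 \<subseteq> U"
        using U x open_contains_ball by blast
      define r where "r = min e1 e2"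
      have r: "r > 0" "ball x r \<subseteq> U" using e1 e2 unfolding r_def by auto
      have z: "\<xi> y = 0" if y: "y \<in> ball x r" for y
      proof -
        have yU: "y \<in> U" using y r by blast
        have "dist y x < e1" using y unfolding r_def by (simp add: dist_commute)
        then have "\<bar>nsq g \<xi> y\<bar> < \<bar>c\<bar>" using e1 f0 by (simp add: dist_real_def)
        then have "nsq g \<xi> y = 0" using vals[OF yU] by auto
        then show ?thesis using pos[OF yU, of "\<xi> y"] unfolding nsq_inner by force
      qed
      have x0: "\<xi> x = 0" using z r by simp
      have dz: "pd i (\<lambda>y. \<xi> y $ k) x = 0" for i k
      proof -
        have "pd i (\<lambda>y. \<xi> y $ k) x = pd i (\<lambda>y. 0) x"
          by (rule pd_local[of "ball x r"]) (use r z in auto)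
        then show ?thesis by (simp add: pd_const)
      qed
      obtain i :: 'n where True by blast
      have "1/2 * lie_g g \<xi> x $ i $ i = \<gamma> * g x $ i $ i + \<delta> * flat g \<xi> x $ i * flat g \<xi> x $ i"
        using sol x unfolding xi_flat_yamabe_soliton_def by blast
      then have "\<gamma> * g x $ i $ i = 0"
        unfolding lie_g_def flat_def by (simp add: dz x0)
      moreover have "g x $ i $ i > 0"
      proof -
        have "axis i 1 \<bullet> (g x *v axis i 1) > 0" using pos[OF x, of "axis i 1"] by (simp add: axis_eq_0_iff)
        moreover have "axis i 1 \<bullet> (g x *v axis i 1) = g x $ i $ i"
          by (simp add: inner_vec_def matrix_vector_mult_def axis_def dsum1 dsum3)
        ultimately show ?thesis by simp
      qed
      ultimately show False using g0 by simp
    qed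
    then show ?thesis using divF[OF U rm x sol] f0 by simp
  qed
  then show ?thesis by blast
qed


end
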